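(* Let $t$ be a positive integer and let $G$ be a graph with no odd $K_t$ minor. Then $$\chi(G) \le 2t\left(1+\log\left(\frac{|V(G)|}{t}\right)\right).$$
   Context: Graphs are finite and simple; $\chi$ is the chromatic number; $\log$ is the natural logarithm. A graph $G$ has an odd $K_t$ minor if a graph isomorphic to $K_t$ (complete graph on $t$ vertices) can be obtained from a subgraph $G'$ of $G$ by contracting a set of edges forming a cut in $G'$ (the empty set is a cut). *)

theory Defs
  imports Complex_Main
begin

definition simple_graph :: "'a set \<Rightarrow> 'a set set \<Rightarrow> bool" where
  "simple_graph V E \<longleftrightarrow> finite V \<and> (\<forall>e\<in>E. \<exists>u v. u \<in> V \<and> v \<in> V \<and> u \<noteq> v \<and> e = {u, v})"

definition subgraph :: "'a set \<Rightarrow> 'a set set \<Rightarrow> 'a set \<Rightarrow> 'a set set \<Rightarrow> bool" where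
  "subgraph V' E' V E \<longleftrightarrow> V' \<subseteq> V \<and> E' \<subseteq> E \<and> (\<forall>e\<in>E'. e \<subseteq> V')"

definition colourable :: "'a set \<Rightarrow> 'a set set \<Rightarrow> nat \<Rightarrow> bool" where
  "colourable V E k \<longleftrightarrow> (\<exists>c :: 'a \<Rightarrow> nat. (\<forall>v\<in>V. c v < k) \<and>
      (\<forall>u v. {u, v} \<in> E \<longrightarrow> u \<noteq> v \<longrightarrow> c u \<noteq> c v))"

definition chromatic_number :: "'a set \<Rightarrow> 'a set set \<Rightarrow> nat" where
  "chromatic_number V E = (LEAST k. colourable V E k)"

definition is_cut :: "'a set \<Rightarrow> 'a set set \<Rightarrow> 'a set set \<Rightarrow> bool" where
  "is_cut V' E' F \<longleftrightarrow> (\<exists>X \<subseteq> V'. F = {e \<in> E'. card (e \<inter> X) = 1})"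

definition components :: "'a set \<Rightarrow> 'a set set \<Rightarrow> 'a set set" where
  "components V' F = {{w \<in> V'. (\<lambda>x y. {x, y} \<in> F)\<^sup>*\<^sup>* u w} | u. u \<in> V'}"

text \<open>Contracting F in (V',E') yields a multigraph whose vertices are the components of
  (V',F) and whose edges are the edges of E' - F, each joining the components of its ends
  (a loop if both ends lie in the same component). This multigraph is isomorphic to K_t iff
  there are exactly t components, there are no loops, and every pair of distinct components
  is joined by exactly one edge.\<close>
definition contraction_is_complete :: "'a set \<Rightarrow> 'a set set \<Rightarrow> 'a set set \<Rightarrow> nat \<Rightarrow> bool" where
  "contraction_is_complete V' E' F t \<longleftrightarrow>
     card (components V' F) = t \<and>
     (\<forall>e \<in> E' - F. \<forall>C \<in> components V' F. \<not> e \<subseteq> C) \<and>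
     (\<forall>C \<in> components V' F. \<forall>D \<in> components V' F. C \<noteq> D \<longrightarrow>
        (\<exists>!e. e \<in> E' - F \<and> e \<inter> C \<noteq> {} \<and> e \<inter> D \<noteq> {}))"

definition has_odd_complete_minor :: "'a set \<Rightarrow> 'a set set \<Rightarrow> nat \<Rightarrow> bool" where
  "has_odd_complete_minor V E t \<longleftrightarrow>
     (\<exists>V' E' F. subgraph V' E' V E \<and> is_cut V' E' F \<and> contraction_is_complete V' E' F t)"

end

theory Submission
  imports Defs
begin


definition nbhd :: "'a set \<Rightarrow> 'a set set \<Rightarrow> 'a set \<Rightarrow> 'a set" where
  "nbhd V E C = {v \<in> V - C. \<exists>u\<in>C. {u,v} \<in> E}"

definition indu :: "'a set set \<Rightarrow> 'a set \<Rightarrow> 'a set set" where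
  "indu E W = {e \<in> E. e \<subseteq> W}"

definition indep :: "'a set set \<Rightarrow> 'a set \<Rightarrow> bool" where
  "indep E S \<longleftrightarrow> (\<forall>u\<in>S. \<forall>v\<in>S. {u,v} \<notin> E)"

lemma edge_form:
  assumes "simple_graph V E" "e \<in> E"
  shows "\<exists>u v. u \<in> V \<and> v \<in> V \<and> u \<noteq> v \<and> e = {u, v}"
  using assms unfolding simple_graph_def by blast

lemma card_2set_inter:
  assumes "x \<noteq> y"
  shows "card ({x,y} \<inter> A) = 1 \<longleftrightarrow> ((x\<in>A) \<noteq> (y\<in>A))"
  using assms by (cases "x \<in> A"; cases "y \<in> A") auto

lemma rtranclp_edge_sym:
  assumes "(\<lambda>x y. {x,y} \<in> F)\<^sup>*\<^sup>* x y"
  shows "(\<lambda>x y. {x,y} \<in> F)\<^sup>*\<^sup>* y x"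
  using assms
proof (induction rule: rtranclp_induct)
  case base
  then show ?case by simp
next
  case (step y z)
  have "{z,y} \<in> F" using step(2) by (simp add: insert_commute)
  then show ?case using step(3) by (simp add: converse_rtranclp_into_rtranclp)
qed

lemma comp_sub:
  assumes "D \<in> components V F"
  shows "D \<subseteq> V \<and> D \<noteq> {}"
  using assms unfolding components_def by auto

lemma comp_finite:
  assumes "finite V"
  shows "finite (components V F)"
proof -
  have "components V F \<subseteq> Pow V" unfolding components_def by auto
  then show ?thesis using assms finite_subset by blast
qed

lemma comp_disj:
  assumes "D1 \<in> components V F" "D2 \<in> components V F" "x \<in> D1" "x \<in> D2"
  shows "D1 = D2"
proof -
  let ?R = "\<lambda>x y. {x,y} \<in> F"
  obtain u1 where u1: "u1 \<in> V" "D1 = {w \<in> V. ?R\<^sup>*\<^sup>* u1 w}" using assms(1) unfolding components_def by auto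
  obtain u2 where u2: "u2 \<in> V" "D2 = {w \<in> V. ?R\<^sup>*\<^sup>* u2 w}" using assms(2) unfolding components_def by auto
  have h1: "?R\<^sup>*\<^sup>* u1 x" and h2: "?R\<^sup>*\<^sup>* u2 x" using u1 u2 assms by auto
  have a: "?R\<^sup>*\<^sup>* u1 u2" "?R\<^sup>*\<^sup>* u2 u1"
    using rtranclp_trans[OF h1 rtranclp_edge_sym[OF h2]] rtranclp_trans[OF h2 rtranclp_edge_sym[OF h1]] by auto
  have "\<And>w. ?R\<^sup>*\<^sup>* u1 w \<longleftrightarrow> ?R\<^sup>*\<^sup>* u2 w"
    using a rtranclp_trans[of ?R u1 u2] rtranclp_trans[of ?R u2 u1] by blast
  then show ?thesis using u1 u2 by auto
qed

lemma comp_union: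
  assumes disj: "V' \<inter> C = {}" and FV: "\<forall>e\<in>F. e \<subseteq> V'" and TC: "\<forall>e\<in>T. e \<subseteq> C"
    and rC: "r \<in> C" and conn: "\<forall>u\<in>C. (\<lambda>x y. {x,y}\<in>T)\<^sup>*\<^sup>* r u"
  shows "components (V' \<union> C) (F \<union> T) = insert C (components V' F)"
proof -
  let ?R = "\<lambda>x y. {x,y} \<in> F"
  let ?Q = "\<lambda>x y. {x,y} \<in> F \<union> T"
  let ?S = "\<lambda>x y. {x,y} \<in> T"
  have A: "?R\<^sup>*\<^sup>* u w \<and> w \<in> V'" if "?Q\<^sup>*\<^sup>* u w" "u \<in> V'" for u w
    using that
  proof (induction rule: rtranclp_induct)
    case base then show ?case by simp
  next
    case (step y z)
    then have y: "y \<in> V'" "?R\<^sup>*\<^sup>* u y" by auto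
    have "{y,z} \<notin> T" using y(1) TC disj by blast
    then have "{y,z} \<in> F" using step(2) by simp
    then show ?case using y FV by (meson insert_subset rtranclp.rtrancl_into_rtrancl)
  qed
  have B: "w \<in> C" if "?Q\<^sup>*\<^sup>* u w" "u \<in> C" for u w
    using that
  proof (induction rule: rtranclp_induct)
    case base then show ?case by simp
  next
    case (step y z)
    have "{y,z} \<notin> F" using step FV disj by blast
    then have "{y,z} \<in> T" using step(2) by simp
    then show ?case using TC by blast
  qed
  have mR: "?Q\<^sup>*\<^sup>* u w" if "?R\<^sup>*\<^sup>* u w" for u w
    using that by (induction rule: rtranclp_induct) (auto intro: rtranclp.rtrancl_into_rtrancl)
  have mS: "?Q\<^sup>*\<^sup>* u w" if "?S\<^sup>*\<^sup>* u w" for u w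
    using that by (induction rule: rtranclp_induct) (auto intro: rtranclp.rtrancl_into_rtrancl)
  have Cc: "?Q\<^sup>*\<^sup>* u w" if "u \<in> C" "w \<in> C" for u w
  proof -
    have "?S\<^sup>*\<^sup>* u r" using conn that rtranclp_edge_sym by metis
    moreover have "?S\<^sup>*\<^sup>* r w" using conn that by auto
    ultimately show ?thesis by (rule rtranclp_trans[OF mS mS])
  qed
  have e1: "{w \<in> V' \<union> C. ?Q\<^sup>*\<^sup>* u w} = {w \<in> V'. ?R\<^sup>*\<^sup>* u w}" if "u \<in> V'" for u
    using A[OF _ that] mR by auto
  have e2: "{w \<in> V' \<union> C. ?Q\<^sup>*\<^sup>* u w} = C" if "u \<in> C" for u
    using B[OF _ that] Cc[OF that] by auto
  show ?thesis
  proof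
    show "components (V' \<union> C) (F \<union> T) \<subseteq> insert C (components V' F)"
    proof
      fix D assume "D \<in> components (V' \<union> C) (F \<union> T)"
      then obtain u where u: "u \<in> V' \<union> C" "D = {w \<in> V' \<union> C. ?Q\<^sup>*\<^sup>* u w}"
        unfolding components_def by auto
      show "D \<in> insert C (components V' F)"
      proof (cases "u \<in> V'")
        case True
        then show ?thesis using u e1 unfolding components_def by auto
      next
        case False
        then show ?thesis using u e2 by auto
      qed
    qed
  next
    show "insert C (components V' F) \<subseteq> components (V' \<union> C) (F \<union> T)"
    proof
      fix D assume D: "D \<in> insert C (components V' F)"
      show "D \<in> components (V' \<union> C) (F \<union> T)"
      proof (cases "D = C")
        case True
        then have "D = {w \<in> V' \<union> C. ?Q\<^sup>*\<^sup>* r w}" using e2[OF rC] by simp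
        then show ?thesis using rC unfolding components_def by auto
      next
        case False
        then obtain u where u: "u \<in> V'" "D = {w \<in> V'. ?R\<^sup>*\<^sup>* u w}"
          using D unfolding components_def by auto
        then have "D = {w \<in> V' \<union> C. ?Q\<^sup>*\<^sup>* u w}" using e1 by simp
        then show ?thesis using u(1) unfolding components_def by auto
      qed
    qed
  qed
qed


lemma lift:
  assumes sg: "simple_graph V E"
    and CV: "C \<subseteq> V" and IC: "I \<subseteq> C" and rI: "r \<in> I"
    and TE: "T \<subseteq> E" and Tf: "\<forall>e\<in>T. \<exists>u\<in>I. \<exists>v\<in>C-I. e = {u,v}"
    and conn: "\<forall>u\<in>C. (\<lambda>x y. {x,y}\<in>T)\<^sup>*\<^sup>* r u"
    and NI: "\<forall>v\<in>nbhd V E C. \<exists>u\<in>I. {u,v} \<in> E"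
    and minor: "has_odd_complete_minor (nbhd V E C) (indu E (nbhd V E C)) s"
  shows "has_odd_complete_minor V E (Suc s)"
proof -
  define N where "N = nbhd V E C"
  obtain V' E' F where sub: "subgraph V' E' N (indu E N)" and cut: "is_cut V' E' F"
    and cc: "contraction_is_complete V' E' F s"
    using minor unfolding has_odd_complete_minor_def N_def by blast
  have "\<exists>X. X \<subseteq> V' \<and> F = {e \<in> E'. card (e \<inter> X) = 1}"
    using cut unfolding is_cut_def .
  then obtain X where XV: "X \<subseteq> V'" and FX: "F = {e \<in> E'. card (e \<inter> X) = 1}"
    by (elim exE conjE)
  define comps where "comps = components V' F"
  have ccu: "card comps = s \<and> (\<forall>e \<in> E' - F. \<forall>D \<in> comps. \<not> e \<subseteq> D) \<and>
     (\<forall>A \<in> comps. \<forall>B \<in> comps. A \<noteq> B \<longrightarrow> (\<exists>!e. e \<in> E' - F \<and> e \<inter> A \<noteq> {} \<and> e \<inter> B \<noteq> {}))"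
    using cc unfolding contraction_is_complete_def comps_def .
  have cs: "card comps = s" using ccu by (rule conjunct1)
  have noloop: "\<forall>e \<in> E' - F. \<forall>D \<in> comps. \<not> e \<subseteq> D" using ccu by (rule conjunct1[OF conjunct2])
  have uniq: "\<forall>A \<in> comps. \<forall>B \<in> comps. A \<noteq> B \<longrightarrow> (\<exists>!e. e \<in> E' - F \<and> e \<inter> A \<noteq> {} \<and> e \<inter> B \<noteq> {})"
    using ccu by (rule conjunct2[OF conjunct2])
  have NC: "N \<inter> C = {}" "N \<subseteq> V" unfolding N_def nbhd_def by auto
  have V'N: "V' \<subseteq> N" and E'E: "E' \<subseteq> E" and E'V': "\<forall>e\<in>E'. e \<subseteq> V'"
    using sub unfolding subgraph_def indu_def by auto
  have V'C: "V' \<inter> C = {}" using V'N NC by blast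
  have finV: "finite V" using sg unfolding simple_graph_def by simp
  have finV': "finite V'" by (rule finite_subset[OF _ finV]) (use V'N NC in blast)
  have E'form: "\<exists>x y. x \<in> V' \<and> y \<in> V' \<and> x \<noteq> y \<and> e = {x,y}" if eE: "e \<in> E'" for e
  proof -
    have "e \<in> E" using eE E'E by blast
    then obtain x y where xy: "x \<noteq> y" "e = {x,y}" using edge_form[OF sg] by blast
    have "{x,y} \<subseteq> V'" using E'V' eE xy(2) by blast
    then show ?thesis using xy by blast
  qed
  have FE': "F \<subseteq> E'" using FX by auto
  define X' where "X' = (if \<exists>D0\<in>comps. D0 \<subseteq> X then V' - X else X)"
  have X'V: "X' \<subseteq> V'" unfolding X'_def using XV by auto
  have X'cut: "card (e \<inter> X') = 1 \<longleftrightarrow> card (e \<inter> X) = 1" if eE: "e \<in> E'" for e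
  proof -
    obtain x y where xy: "x \<in> V'" "y \<in> V'" "x \<noteq> y" "e = {x,y}" using E'form[OF eE] by blast
    have c1: "card (e \<inter> X) = 1 \<longleftrightarrow> ((x\<in>X) \<noteq> (y\<in>X))"
      using card_2set_inter[of x y X] xy by simp
    show ?thesis
    proof (cases "\<exists>D0\<in>comps. D0 \<subseteq> X")
      case True
      then have X'e: "X' = V' - X" unfolding X'_def by simp
      have "card (e \<inter> X') = 1 \<longleftrightarrow> ((x\<in>V' - X) \<noteq> (y\<in>V' - X))"
        using card_2set_inter[of x y "V' - X"] xy X'e by simp
      also have "\<dots> \<longleftrightarrow> ((x\<in>X) \<noteq> (y\<in>X))" using xy by blast
      finally show ?thesis using c1 by simp
    next
      case False
      then show ?thesis unfolding X'_def by simp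
    qed
  qed
  have bex: "\<exists>b\<in>D. b \<notin> X'" if D: "D \<in> comps" for D
  proof (cases "\<exists>D0\<in>comps. D0 \<subseteq> X")
    case True
    then obtain D0 where D0: "D0 \<in> comps" "D0 \<subseteq> X" by blast
    have X'e: "X' = V' - X" using True unfolding X'_def by simp
    show ?thesis
    proof (rule ccontr)
      assume "\<not> (\<exists>b\<in>D. b \<notin> X')"
      then have DX: "D \<inter> X = {}" using X'e comp_sub[of D V' F] D unfolding comps_def by auto
      have D0ne: "D0 \<noteq> {}" using comp_sub D0(1) unfolding comps_def by blast
      have "D \<noteq> D0" using DX D0ne D0(2) by blast
      have "\<exists>!e. e \<in> E' - F \<and> e \<inter> D0 \<noteq> {} \<and> e \<inter> D \<noteq> {}"
        using bspec[OF bspec[OF uniq D0(1)] D] \<open>D \<noteq> D0\<close> by auto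
      then obtain e where e: "e \<in> E' - F" "e \<inter> D0 \<noteq> {}" "e \<inter> D \<noteq> {}"
        by (auto dest: ex1_implies_ex)
      obtain x y where xy: "x \<in> V'" "y \<in> V'" "x \<noteq> y" "e = {x,y}" using E'form e(1) by blast
      obtain p where p: "p \<in> e" "p \<in> D0" using e(2) by blast
      obtain q where q: "q \<in> e" "q \<in> D" using e(3) by blast
      have "p \<noteq> q" using p q DX D0(2) by blast
      then have eq: "e = {p,q}" using p(1) q(1) xy by auto
      have "p \<in> X" "q \<notin> X" using p q DX D0(2) by auto
      then have "card (e \<inter> X) = 1" using eq card_2set_inter[of p q X] \<open>p \<noteq> q\<close> by simp
      then have "e \<in> F" using FX e(1) by simp
      then show False using e(1) by simp
    qed
  next
    case False
    then have "X' = X" unfolding X'_def by simp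
    then show ?thesis using False D by blast
  qed
  have bc: "\<exists>b. b \<in> D \<and> b \<notin> X' \<and> (\<exists>c. c \<in> I \<and> {c,b} \<in> E)" if D: "D \<in> comps" for D
  proof -
    obtain b where b: "b \<in> D" "b \<notin> X'" using bex[OF D] by blast
    have "b \<in> N" using b(1) D comp_sub V'N unfolding comps_def by blast
    then obtain c where "c \<in> I" "{c,b} \<in> E" using NI unfolding N_def by blast
    then show ?thesis using b by blast
  qed
  then have "\<forall>D\<in>comps. \<exists>b. b \<in> D \<and> b \<notin> X' \<and> (\<exists>c. c \<in> I \<and> {c,b} \<in> E)" by blast
  then obtain bf where bf: "\<forall>D\<in>comps. bf D \<in> D \<and> bf D \<notin> X' \<and> (\<exists>c. c \<in> I \<and> {c, bf D} \<in> E)"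
    by (rule bchoice[THEN exE]) blast
  then have "\<forall>D\<in>comps. \<exists>c. c \<in> I \<and> {c, bf D} \<in> E" by blast
  then obtain cf where cf: "\<forall>D\<in>comps. cf D \<in> I \<and> {cf D, bf D} \<in> E"
    by (rule bchoice[THEN exE]) blast
  have bfV: "bf D \<in> V'" if D: "D \<in> comps" for D
  proof -
    have "bf D \<in> D" using bf D by blast
    moreover have "D \<subseteq> V'" using comp_sub[of D V' F] D unfolding comps_def by blast
    ultimately show ?thesis by blast
  qed
  have cfC: "cf D \<in> C" if D: "D \<in> comps" for D using cf D IC by blast
  define J where "J = (\<lambda>D. {cf D, bf D}) ` comps"
  define V'' where "V'' = V' \<union> C"
  define E'' where "E'' = E' \<union> T \<union> J"
  define F'' where "F'' = F \<union> T"
  define X'' where "X'' = X' \<union> (C - I)"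
  have TC: "\<forall>e\<in>T. e \<subseteq> C"
  proof
    fix e assume "e \<in> T"
    then obtain u v where "u \<in> I" "v \<in> C - I" "e = {u,v}" using Tf by blast
    then show "e \<subseteq> C" using IC by auto
  qed
  have rC: "r \<in> C" using rI IC by blast
  have JE: "J \<subseteq> E" unfolding J_def using cf by blast
  have JV: "\<forall>e\<in>J. e \<subseteq> V' \<union> C" unfolding J_def using cfC bfV by blast
  have subg: "subgraph V'' E'' V E"
    unfolding subgraph_def V''_def E''_def
  proof (intro conjI)
    show "V' \<union> C \<subseteq> V" using V'N NC(2) CV by blast
    show "E' \<union> T \<union> J \<subseteq> E" using E'E TE JE by blast
    show "\<forall>e\<in>E' \<union> T \<union> J. e \<subseteq> V' \<union> C" using E'V' TC JV by blast
  qed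
  have E'T: "e \<notin> T" if eE: "e \<in> E'" for e
  proof
    assume eT: "e \<in> T"
    obtain x y where xy: "x \<in> V'" "y \<in> V'" "x \<noteq> y" "e = {x,y}" using E'form[OF eE] by blast
    have "x \<in> C" using TC eT xy(4) by auto
    then show False using xy(1) V'C by auto
  qed
  have JF: "e \<notin> F \<and> e \<notin> T" if eJ: "e \<in> J" for e
  proof -
    obtain D where D: "D \<in> comps" "e = {cf D, bf D}" using eJ unfolding J_def by blast
    have c1: "cf D \<notin> V'" "bf D \<notin> C" using cfC[OF D(1)] bfV[OF D(1)] V'C by auto
    have "e \<notin> F"
    proof
      assume "e \<in> F"
      then have "e \<subseteq> V'" using FE' E'V' by auto
      then show False using c1 D(2) by auto
    qed
    moreover have "e \<notin> T"
    proof
      assume "e \<in> T"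
      then have "e \<subseteq> C" using TC by auto
      then show False using c1 D(2) by auto
    qed
    ultimately show ?thesis by simp
  qed
  have XE': "e \<inter> X'' = e \<inter> X'" if eE: "e \<in> E'" for e
  proof -
    have "e \<subseteq> V'" using E'V' eE by blast
    then have "e \<inter> (C - I) = {}" using V'C by blast
    then show ?thesis unfolding X''_def by (simp add: Int_Un_distrib)
  qed
  have XT: "card (e \<inter> X'') = 1" if eT: "e \<in> T" for e
  proof -
    obtain u v where uv: "u \<in> I" "v \<in> C - I" "e = {u,v}" using Tf eT by blast
    have "u \<notin> X''" using uv X'V V'C IC unfolding X''_def by blast
    moreover have "v \<in> X''" using uv unfolding X''_def by blast
    moreover have "u \<noteq> v" using uv by blast
    ultimately have "e \<inter> X'' = {v}" using uv by (simp add: Int_insert_left)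
    then show ?thesis by simp
  qed
  have XJ: "e \<inter> X'' = {}" if eJ: "e \<in> J" for e
  proof -
    obtain D where D: "D \<in> comps" "e = {cf D, bf D}" using eJ unfolding J_def by blast
    have "cf D \<notin> X''" using cfC[OF D(1)] cf D(1) X'V V'C unfolding X''_def by blast
    moreover have "bf D \<notin> X''" using bf D(1) bfV[OF D(1)] V'C unfolding X''_def by blast
    ultimately show ?thesis using D(2) by (simp add: Int_insert_left)
  qed
  have memF: "e \<in> F \<longleftrightarrow> e \<in> E' \<and> card (e \<inter> X'') = 1" for e
  proof (cases "e \<in> E'")
    case True
    have "e \<in> F \<longleftrightarrow> card (e \<inter> X) = 1" using True FX by blast
    also have "\<dots> \<longleftrightarrow> card (e \<inter> X') = 1" using X'cut[OF True] by simp
    also have "\<dots> \<longleftrightarrow> card (e \<inter> X'') = 1" using XE'[OF True] by simp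
    finally show ?thesis using True by simp
  next
    case False
    then show ?thesis using FE' by blast
  qed
  have cutF: "is_cut V'' E'' F''"
    unfolding is_cut_def
  proof (rule exI[of _ X''], rule conjI)
    show "X'' \<subseteq> V''" unfolding X''_def V''_def using X'V by blast
    show "F'' = {e \<in> E''. card (e \<inter> X'') = 1}"
    proof (rule set_eqI)
      fix e
      show "e \<in> F'' \<longleftrightarrow> e \<in> {e \<in> E''. card (e \<inter> X'') = 1}"
      proof (cases "e \<in> J")
        case True
        then have "e \<notin> F" "e \<notin> T" using JF by blast+
        then show ?thesis using True XJ[OF True] unfolding F''_def by simp
      next
        case False
        then have EE: "e \<in> E'' \<longleftrightarrow> e \<in> E' \<or> e \<in> T" unfolding E''_def by blast
        show ?thesis
        proof (cases "e \<in> T")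
          case True
          then show ?thesis unfolding F''_def using EE XT[OF True] by simp
        next
          case False
          then show ?thesis unfolding F''_def using EE memF[of e] by simp
        qed
      qed
    qed
  qed
  have compsU: "components V'' F'' = insert C comps"
    unfolding V''_def F''_def comps_def
    by (rule comp_union[OF V'C _ TC rC conn]) (use FE' E'V' in blast)
  have Cnot: "C \<notin> comps"
  proof
    assume "C \<in> comps"
    then have "C \<subseteq> V'" using comp_sub[of C V' F] unfolding comps_def by blast
    then show False using rC V'C by auto
  qed
  have finc: "finite comps" using comp_finite[OF finV'] unfolding comps_def .
  have EF: "E'' - F'' = (E' - F) \<union> J"
  proof (rule set_eqI)
    fix e
    show "e \<in> E'' - F'' \<longleftrightarrow> e \<in> (E' - F) \<union> J"
    proof (cases "e \<in> J")
      case True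
      then show ?thesis using JF[OF True] unfolding E''_def F''_def by simp
    next
      case False
      then show ?thesis using E'T[of e] unfolding E''_def F''_def by auto
    qed
  qed
  have compV: "D \<subseteq> V'" if D: "D \<in> comps" for D
    using comp_sub[of D V' F] D unfolding comps_def by blast
  have Jmeet: "D = D'" if D: "D \<in> comps" and D': "D' \<in> comps" and m: "{cf D', bf D'} \<inter> D \<noteq> {}" for D D'
  proof -
    have "cf D' \<notin> D" using cfC[OF D'] V'C compV[OF D] by auto
    then have "bf D' \<in> D" using m by auto
    moreover have "bf D' \<in> D'" using bf D' by auto
    ultimately show "D = D'" using comp_disj[of D V' F D' "bf D'"] D D' unfolding comps_def by blast
  qed
  have Cuniq: "\<exists>!e. e \<in> E'' - F'' \<and> e \<inter> C \<noteq> {} \<and> e \<inter> D \<noteq> {}" if D: "D \<in> comps" for D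
  proof (rule ex1I[of _ "{cf D, bf D}"])
    have "{cf D, bf D} \<in> J" unfolding J_def using D by blast
    then have "{cf D, bf D} \<in> E'' - F''" using EF by simp
    moreover have "{cf D, bf D} \<inter> C \<noteq> {}" using cfC[OF D] by auto
    moreover have "{cf D, bf D} \<inter> D \<noteq> {}" using bf D by auto
    ultimately show "{cf D, bf D} \<in> E'' - F'' \<and> {cf D, bf D} \<inter> C \<noteq> {} \<and> {cf D, bf D} \<inter> D \<noteq> {}"
      by simp
  next
    fix e assume e: "e \<in> E'' - F'' \<and> e \<inter> C \<noteq> {} \<and> e \<inter> D \<noteq> {}"
    have "e \<notin> E'"
    proof
      assume "e \<in> E'"
      then have "e \<subseteq> V'" using E'V' by auto
      then show False using e V'C by auto
    qed
    then have "e \<in> J" using e EF by simp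
    then obtain D' where D': "D' \<in> comps" "e = {cf D', bf D'}" unfolding J_def by blast
    have "D = D'" using Jmeet[OF D D'(1)] e D'(2) by simp
    then show "e = {cf D, bf D}" using D' by simp
  qed
  have Ouniq: "\<exists>!e. e \<in> E'' - F'' \<and> e \<inter> A \<noteq> {} \<and> e \<inter> B \<noteq> {}"
    if A: "A \<in> comps" and B: "B \<in> comps" and AB: "A \<noteq> B" for A B
  proof -
    have nJ: "e \<notin> J" if e: "e \<inter> A \<noteq> {}" "e \<inter> B \<noteq> {}" for e
    proof
      assume "e \<in> J"
      then obtain D where D: "D \<in> comps" "e = {cf D, bf D}" unfolding J_def by blast
      have "A = D" using Jmeet[OF A D(1)] e(1) D(2) by simp
      moreover have "B = D" using Jmeet[OF B D(1)] e(2) D(2) by simp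
      ultimately show False using AB by simp
    qed
    have eq: "(e \<in> E'' - F'' \<and> e \<inter> A \<noteq> {} \<and> e \<inter> B \<noteq> {}) \<longleftrightarrow> (e \<in> E' - F \<and> e \<inter> A \<noteq> {} \<and> e \<inter> B \<noteq> {})" for e
      using EF nJ[of e] by auto
    have "\<exists>!e. e \<in> E' - F \<and> e \<inter> A \<noteq> {} \<and> e \<inter> B \<noteq> {}"
      using uniq A B AB by simp
    then show ?thesis unfolding eq .
  qed
  have ccF: "contraction_is_complete V'' E'' F'' (Suc s)"
    unfolding contraction_is_complete_def compsU
  proof (intro conjI ballI impI)
    show "card (insert C comps) = Suc s" using Cnot finc cs by simp
  next
    fix e D assume e: "e \<in> E'' - F''" and D: "D \<in> insert C comps"
    show "\<not> e \<subseteq> D"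
    proof
      assume sub: "e \<subseteq> D"
      have "e \<in> E' - F \<or> e \<in> J" using e EF by simp
      then show False
      proof
        assume e1: "e \<in> E' - F"
        obtain x y where xy: "x \<in> V'" "y \<in> V'" "e = {x,y}" using E'form[of e] e1 by blast
        show False
        proof (cases "D = C")
          case True then show ?thesis using sub xy V'C by auto
        next
          case False
          then have "D \<in> comps" using D by simp
          then show ?thesis using noloop e1 sub by blast
        qed
      next
        assume "e \<in> J"
        then obtain D' where D': "D' \<in> comps" "e = {cf D', bf D'}" unfolding J_def by blast
        show False
        proof (cases "D = C")
          case True then show ?thesis using sub D' bfV[OF D'(1)] V'C by auto
        next
          case False
          then have "D \<subseteq> V'" using D compV by simp
          then show ?thesis using sub D' cfC[OF D'(1)] V'C by auto
        qed
      qed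
    qed
  next
    fix A B assume A: "A \<in> insert C comps" and B: "B \<in> insert C comps" and AB: "A \<noteq> B"
    show "\<exists>!e. e \<in> E'' - F'' \<and> e \<inter> A \<noteq> {} \<and> e \<inter> B \<noteq> {}"
    proof (cases "A = C")
      case True
      then have Bc: "B \<in> comps" using B AB by simp
      show ?thesis using Cuniq[OF Bc] True by simp
    next
      case False
      note AF = False
      then have Ac: "A \<in> comps" using A by simp
      show ?thesis
      proof (cases "B = C")
        case True
        have eq: "(e \<in> E'' - F'' \<and> e \<inter> A \<noteq> {} \<and> e \<inter> B \<noteq> {}) \<longleftrightarrow> (e \<in> E'' - F'' \<and> e \<inter> C \<noteq> {} \<and> e \<inter> A \<noteq> {})" for e
          using True by auto
        show ?thesis unfolding eq by (rule Cuniq[OF Ac])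
      next
        case False
        then have Bc: "B \<in> comps" using B by simp
        show ?thesis by (rule Ouniq[OF Ac Bc AB])
      qed
    qed
  qed
  show ?thesis unfolding has_odd_complete_minor_def using subg cutF ccF by blast
qed



definition struc :: "'a set \<Rightarrow> 'a set set \<Rightarrow> 'a \<Rightarrow> 'a set \<Rightarrow> 'a set \<Rightarrow> 'a set set \<Rightarrow> bool" where
  "struc V E r C I T \<longleftrightarrow> C \<subseteq> V \<and> I \<subseteq> C \<and> r \<in> I \<and> indep E I \<and> T \<subseteq> E \<and>
     (\<forall>e\<in>T. \<exists>u\<in>I. \<exists>v\<in>C-I. e = {u,v}) \<and> (\<forall>u\<in>C. (\<lambda>x y. {x,y}\<in>T)\<^sup>*\<^sup>* r u) \<and>
     (\<forall>v\<in>nbhd V E C. \<exists>u\<in>I. {u,v} \<in> E) \<and> card C + 1 \<le> 2 * card I"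

definition closed :: "'a set \<Rightarrow> 'a set set \<Rightarrow> 'a set \<Rightarrow> bool" where
  "closed V E C \<longleftrightarrow> (\<forall>v\<in>nbhd V E C. \<forall>w. {v,w} \<in> E \<longrightarrow> w \<in> C \<union> nbhd V E C)"

lemma no_loop:
  assumes "simple_graph V E"
  shows "{z} \<notin> E"
proof
  assume "{z} \<in> E"
  then obtain u v where uv: "u \<noteq> v" "{z} = {u,v}" using edge_form[OF assms] by blast
  then have "u \<in> {z}" "v \<in> {z}" by auto
  then show False using uv(1) by simp
qed

lemma edge_in:
  assumes "simple_graph V E" "{u,v} \<in> E"
  shows "u \<in> V" "v \<in> V"
proof -
  obtain a b where ab: "a \<in> V" "b \<in> V" "{u,v} = {a,b}" using edge_form[OF assms] by blast
  then show "u \<in> V" "v \<in> V" by (metis doubleton_eq_iff)+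
qed

lemma maxind:
  assumes "finite Z" and nl: "\<forall>z. {z} \<notin> E"
  shows "\<exists>M\<subseteq>Z. indep E M \<and> (\<forall>z\<in>Z-M. \<exists>m\<in>M. {m,z} \<in> E)"
  using assms(1)
proof (induction rule: finite_induct)
  case empty
  then show ?case unfolding indep_def by blast
next
  case (insert z Z)
  then obtain M where M: "M \<subseteq> Z" "indep E M" "\<forall>y\<in>Z-M. \<exists>m\<in>M. {m,y} \<in> E" by blast
  show ?case
  proof (cases "\<exists>m\<in>M. {m,z} \<in> E")
    case True
    then show ?thesis using M by (intro exI[of _ M]) auto
  next
    case False
    have "indep E (insert z M)"
      unfolding indep_def
    proof (intro ballI)
      fix u v assume u: "u \<in> insert z M" and v: "v \<in> insert z M"
      show "{u,v} \<notin> E"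
      proof (cases "u = z")
        case True
        show ?thesis
        proof (cases "v = z")
          case True then show ?thesis using \<open>u = z\<close> nl by simp
        next
          case False then have "v \<in> M" using v by simp
          then show ?thesis using \<open>u = z\<close> \<open>\<not> (\<exists>m\<in>M. {m,z} \<in> E)\<close> by (metis insert_commute)
        qed
      next
        case uF: False
        then have uM: "u \<in> M" using u by simp
        show ?thesis
        proof (cases "v = z")
          case True then show ?thesis using uM \<open>\<not> (\<exists>m\<in>M. {m,z} \<in> E)\<close> by simp
        next
          case False then have "v \<in> M" using v by simp
          then show ?thesis using uM M(2) unfolding indep_def by simp
        qed
      qed
    qed
    then show ?thesis using M by (intro exI[of _ "insert z M"]) auto
  qed
qed

lemma struc_init:
  assumes "simple_graph V E" "r \<in> V"
  shows "struc V E r {r} {r} {}"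
  unfolding struc_def indep_def nbhd_def using assms no_loop[OF assms(1)] by auto

lemma grow:
  assumes sg: "simple_graph V E" and st: "struc V E r C I T" and nc: "\<not> closed V E C"
  shows "\<exists>C' I' T'. struc V E r C' I' T' \<and> card C < card C'"
proof -
  have CV: "C \<subseteq> V" and IC: "I \<subseteq> C" and rI: "r \<in> I" and indI: "indep E I" and TE: "T \<subseteq> E"
    and Tf: "\<forall>e\<in>T. \<exists>u\<in>I. \<exists>v\<in>C-I. e = {u,v}"
    and conn: "\<forall>u\<in>C. (\<lambda>x y. {x,y}\<in>T)\<^sup>*\<^sup>* r u"
    and NI: "\<forall>v\<in>nbhd V E C. \<exists>u\<in>I. {u,v} \<in> E"
    and cardC: "card C + 1 \<le> 2 * card I"
    using st unfolding struc_def by blast+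
  have finV: "finite V" using sg unfolding simple_graph_def by simp
  have finC: "finite C" using finite_subset[OF CV finV] .
  define N where "N = nbhd V E C"
  obtain y w where y: "y \<in> N" and yw: "{y,w} \<in> E" and wn: "w \<notin> C \<union> N"
    using nc unfolding closed_def N_def by blast
  have yV: "y \<in> V" "y \<notin> C" using y unfolding N_def nbhd_def by auto
  obtain i where i: "i \<in> I" "{i,y} \<in> E" using NI y unfolding N_def by blast
  define Z where "Z = {z \<in> V. z \<notin> C \<union> N \<and> {y,z} \<in> E}"
  have wZ: "w \<in> Z" unfolding Z_def using wn yw edge_in[OF sg yw] by simp
  have finZ: "finite Z" unfolding Z_def using finV by simp
  have nl: "\<forall>z. {z} \<notin> E" using no_loop[OF sg] by blast
  obtain M where M: "M \<subseteq> Z" "indep E M" "\<forall>z\<in>Z-M. \<exists>m\<in>M. {m,z} \<in> E"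
    using maxind[OF finZ nl] by blast
  have Mne: "M \<noteq> {}" using M(3) wZ by blast
  have MC: "M \<inter> C = {}" "M \<inter> N = {}" "y \<notin> M" using M(1) y unfolding Z_def by auto
  have MV: "M \<subseteq> V" using M(1) unfolding Z_def by auto
  have yM: "{y,m} \<in> E" if "m \<in> M" for m using M(1) that unfolding Z_def by auto
  define C' where "C' = C \<union> {y} \<union> M"
  define I' where "I' = I \<union> M"
  define T' where "T' = T \<union> {{i,y}} \<union> (\<lambda>m. {y,m}) ` M"
  have finM: "finite M" using finite_subset[OF M(1) finZ] .
  have noIM: "{u,m} \<notin> E" if "u \<in> I" "m \<in> M" for u m
  proof
    assume "{u,m} \<in> E"
    moreover have "m \<in> V" "m \<notin> C" using MV MC that by auto
    ultimately have "m \<in> N" using that IC unfolding N_def nbhd_def by auto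
    then show False using MC that by auto
  qed
  have s1: "C' \<subseteq> V" unfolding C'_def using CV yV MV by auto
  have s2: "I' \<subseteq> C'" unfolding I'_def C'_def using IC by auto
  have s3: "r \<in> I'" unfolding I'_def using rI by auto
  have s4: "indep E I'"
    unfolding indep_def I'_def
  proof (intro ballI)
    fix u v assume u: "u \<in> I \<union> M" and v: "v \<in> I \<union> M"
    show "{u,v} \<notin> E"
    proof (cases "u \<in> I")
      case True
      show ?thesis
      proof (cases "v \<in> I")
        case True then show ?thesis using \<open>u \<in> I\<close> indI unfolding indep_def by simp
      next
        case False then show ?thesis using v noIM \<open>u \<in> I\<close> by auto
      qed
    next
      case False
      then have uM: "u \<in> M" using u by simp
      show ?thesis
      proof (cases "v \<in> I")
        case True then show ?thesis using noIM[OF True uM] by (metis insert_commute)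
      next
        case False then have "v \<in> M" using v by simp
        then show ?thesis using uM M(2) unfolding indep_def by simp
      qed
    qed
  qed
  have s5: "T' \<subseteq> E" unfolding T'_def using TE i(2) yM by auto
  have yCI: "y \<in> C' - I'" unfolding C'_def I'_def using yV MC IC by auto
  have s6: "\<forall>e\<in>T'. \<exists>u\<in>I'. \<exists>v\<in>C'-I'. e = {u,v}"
  proof
    fix e assume e: "e \<in> T'"
    then consider "e \<in> T" | "e = {i,y}" | "\<exists>m\<in>M. e = {y,m}" unfolding T'_def by blast
    then show "\<exists>u\<in>I'. \<exists>v\<in>C'-I'. e = {u,v}"
    proof cases
      case 1
      then obtain u v where uv: "u \<in> I" "v \<in> C - I" "e = {u,v}" using Tf by blast
      have "v \<in> C' - I'" using uv MC unfolding C'_def I'_def by auto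
      moreover have "u \<in> I'" using uv unfolding I'_def by auto
      ultimately show ?thesis using uv(3) by blast
    next
      case 2
      have "i \<in> I'" using i unfolding I'_def by auto
      then show ?thesis using 2 yCI by blast
    next
      case 3
      then obtain m where m: "m \<in> M" "e = {y,m}" by blast
      have "m \<in> I'" using m unfolding I'_def by auto
      moreover have "e = {m,y}" using m by (simp add: insert_commute)
      ultimately show ?thesis using yCI by blast
    qed
  qed
  let ?R = "\<lambda>x y. {x,y} \<in> T"
  let ?R' = "\<lambda>x y. {x,y} \<in> T'"
  have mono: "?R'\<^sup>*\<^sup>* a b" if "?R\<^sup>*\<^sup>* a b" for a b
    using that by (induction rule: rtranclp_induct) (auto simp: T'_def intro: rtranclp.rtrancl_into_rtrancl)
  have ry: "?R'\<^sup>*\<^sup>* r y"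
  proof -
    have "?R'\<^sup>*\<^sup>* r i" using mono conn i(1) IC by blast
    moreover have "?R' i y" unfolding T'_def by simp
    ultimately show ?thesis by (rule rtranclp.rtrancl_into_rtrancl)
  qed
  have s7: "\<forall>u\<in>C'. ?R'\<^sup>*\<^sup>* r u"
  proof
    fix u assume "u \<in> C'"
    then consider "u \<in> C" | "u = y" | "u \<in> M" unfolding C'_def by blast
    then show "?R'\<^sup>*\<^sup>* r u"
    proof cases
      case 1 then show ?thesis using mono conn by blast
    next
      case 2 then show ?thesis using ry by simp
    next
      case 3
      then have "?R' y u" unfolding T'_def by blast
      then show ?thesis using ry by (rule rtranclp.rtrancl_into_rtrancl[rotated])
    qed
  qed
  have s8: "\<forall>v\<in>nbhd V E C'. \<exists>u\<in>I'. {u,v} \<in> E"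
  proof
    fix v assume "v \<in> nbhd V E C'"
    then obtain u where v: "v \<in> V" "v \<notin> C'" and u: "u \<in> C'" "{u,v} \<in> E" unfolding nbhd_def by blast
    consider "u \<in> C" | "u = y" | "u \<in> M" using u unfolding C'_def by blast
    then show "\<exists>u\<in>I'. {u,v} \<in> E"
    proof cases
      case 1
      then have "v \<in> N" using v u unfolding N_def nbhd_def C'_def by auto
      then show ?thesis using NI unfolding N_def I'_def by blast
    next
      case 2
      show ?thesis
      proof (cases "v \<in> N")
        case True
        then show ?thesis using NI unfolding N_def I'_def by blast
      next
        case False
        have "v \<notin> C" using v unfolding C'_def by auto
        then have "v \<in> Z" unfolding Z_def using False v u 2 by auto
        moreover have "v \<notin> M" using v unfolding C'_def by auto
        ultimately obtain m where "m \<in> M" "{m,v} \<in> E" using M(3) by blast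
        then show ?thesis unfolding I'_def by blast
      qed
    next
      case 3
      then show ?thesis using u unfolding I'_def by blast
    qed
  qed
  have cC': "card C' = card C + 1 + card M"
  proof -
    have "card C' = card (C \<union> {y}) + card M"
      unfolding C'_def using finC finM MC by (intro card_Un_disjoint) auto
    moreover have "card (C \<union> {y}) = card C + 1" using finC yV by simp
    ultimately show ?thesis by simp
  qed
  have cI': "card I' = card I + card M"
    unfolding I'_def using finite_subset[OF IC finC] finM MC IC by (intro card_Un_disjoint) auto
  have cM: "card M \<ge> 1" using Mne finM by (simp add: Suc_leI card_gt_0_iff)
  have s9: "card C' + 1 \<le> 2 * card I'" using cC' cI' cM cardC by simp
  have "struc V E r C' I' T'" unfolding struc_def using s1 s2 s3 s4 s5 s6 s7 s8 s9 by blast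
  moreover have "card C < card C'" using cC' by simp
  ultimately show ?thesis by blast
qed

lemma closed_exists_aux:
  assumes sg: "simple_graph V E"
  shows "struc V E r C I T \<Longrightarrow> \<exists>C' I' T'. struc V E r C' I' T' \<and> closed V E C'"
proof (induction "card V - card C" arbitrary: C I T rule: less_induct)
  case less
  show ?case
  proof (cases "closed V E C")
    case True then show ?thesis using less.prems by blast
  next
    case False
    obtain C' I' T' where st: "struc V E r C' I' T'" and lt: "card C < card C'"
      using grow[OF sg less.prems False] by blast
    have "C' \<subseteq> V" using st unfolding struc_def by blast
    then have "card C' \<le> card V" using sg unfolding simple_graph_def by (simp add: card_mono)
    then have "card V - card C' < card V - card C" using lt by simp
    then show ?thesis using less.hyps st by blast
  qed
qed

lemma closed_exists:
  assumes sg: "simple_graph V E" and r: "r \<in> V"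
  shows "\<exists>C I T. struc V E r C I T \<and> closed V E C"
  using closed_exists_aux[OF sg struc_init[OF sg r]] by blast



lemma odd_mono:
  assumes "has_odd_complete_minor W (indu E W) k" "W \<subseteq> V"
  shows "has_odd_complete_minor V E k"
proof -
  obtain V' E' F where "subgraph V' E' W (indu E W)" "is_cut V' E' F" "contraction_is_complete V' E' F k"
    using assms(1) unfolding has_odd_complete_minor_def by blast
  moreover have "subgraph V' E' V E"
    using calculation(1) assms(2) unfolding subgraph_def indu_def by blast
  ultimately show ?thesis unfolding has_odd_complete_minor_def by blast
qed

lemma simple_indu:
  assumes sg: "simple_graph V E" and WV: "W \<subseteq> V"
  shows "simple_graph W (indu E W)"
  unfolding simple_graph_def
proof (intro conjI ballI)
  show "finite W" using sg WV finite_subset unfolding simple_graph_def by auto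
next
  fix e assume e: "e \<in> indu E W"
  then have eE: "e \<in> E" and eW: "e \<subseteq> W" unfolding indu_def by auto
  obtain u v where uv: "u \<noteq> v" "e = {u,v}" using edge_form[OF sg eE] by blast
  then have "u \<in> W" "v \<in> W" using eW by auto
  then show "\<exists>u v. u \<in> W \<and> v \<in> W \<and> u \<noteq> v \<and> e = {u, v}" using uv by blast
qed

lemma indep_indu:
  assumes "indep (indu E W) S" "S \<subseteq> W"
  shows "indep E S"
  using assms unfolding indep_def indu_def by auto

lemma K1:
  assumes sg: "simple_graph V E" and r: "r \<in> V"
  shows "has_odd_complete_minor V E (Suc 0)"
proof -
  have comp: "components {r} {} = {{r}}"
    unfolding components_def by auto
  have "subgraph {r} {} V E" unfolding subgraph_def using r by auto
  moreover have "is_cut {r} {} {}" unfolding is_cut_def by auto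
  moreover have "contraction_is_complete {r} {} {} (Suc 0)"
    unfolding contraction_is_complete_def comp by simp
  ultimately show ?thesis unfolding has_odd_complete_minor_def by blast
qed

lemma alpha_step:
  assumes IH: "\<And>(V::'a set) E. simple_graph V E \<Longrightarrow> \<not> has_odd_complete_minor V E (Suc t) \<Longrightarrow>
                 \<exists>S\<subseteq>V. indep E S \<and> card V \<le> 2 * t * card S"
  shows "simple_graph (V::'a set) E \<Longrightarrow> \<not> has_odd_complete_minor V E (Suc (Suc t)) \<Longrightarrow>
          \<exists>S\<subseteq>V. indep E S \<and> card V \<le> 2 * Suc t * card S"
proof (induction "card V" arbitrary: V E rule: less_induct)
  case less
  note sg = less.prems(1) and nm = less.prems(2)
  have finV: "finite V" using sg unfolding simple_graph_def by simp
  show ?case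
  proof (cases "V = {}")
    case True
    then show ?thesis unfolding indep_def by auto
  next
    case False
    then obtain r where r: "r \<in> V" by blast
    obtain C I T where st: "struc V E r C I T" and cl: "closed V E C"
      using closed_exists[OF sg r] by blast
    have CV: "C \<subseteq> V" and IC: "I \<subseteq> C" and rI: "r \<in> I" and indI: "indep E I" and TE: "T \<subseteq> E"
      and Tf: "\<forall>e\<in>T. \<exists>u\<in>I. \<exists>v\<in>C-I. e = {u,v}"
      and conn: "\<forall>u\<in>C. (\<lambda>x y. {x,y}\<in>T)\<^sup>*\<^sup>* r u"
      and NI: "\<forall>v\<in>nbhd V E C. \<exists>u\<in>I. {u,v} \<in> E"
      and cardC: "card C + 1 \<le> 2 * card I"
      using st unfolding struc_def by blast+
    define N where "N = nbhd V E C"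
    define R where "R = V - (C \<union> N)"
    have NV: "N \<subseteq> V" and NC: "N \<inter> C = {}" unfolding N_def nbhd_def by auto
    have RV: "R \<subseteq> V" unfolding R_def by auto
    have nmN: "\<not> has_odd_complete_minor N (indu E N) (Suc t)"
    proof
      assume "has_odd_complete_minor N (indu E N) (Suc t)"
      then have "has_odd_complete_minor V E (Suc (Suc t))"
        using lift[OF sg CV IC rI TE Tf conn NI] unfolding N_def by blast
      then show False using nm by simp
    qed
    obtain SN where SN: "SN \<subseteq> N" "indep (indu E N) SN" "card N \<le> 2 * t * card SN"
      using IH[OF simple_indu[OF sg NV] nmN] by blast
    have indSN: "indep E SN" using indep_indu SN by blast
    have nmR: "\<not> has_odd_complete_minor R (indu E R) (Suc (Suc t))"
      using odd_mono[OF _ RV] nm by blast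
    have "r \<notin> R" unfolding R_def using rI IC by auto
    then have "R \<subset> V" using RV r by blast
    then have cR: "card R < card V" using finV psubset_card_mono by blast
    obtain SR where SR: "SR \<subseteq> R" "indep (indu E R) SR" "card R \<le> 2 * Suc t * card SR"
      using less.hyps[OF cR simple_indu[OF sg RV] nmR] by blast
    have indSR: "indep E SR" using indep_indu SR by blast
    define S0 where "S0 = (if card SN \<le> card I then I else SN)"
    have S0: "S0 \<subseteq> C \<union> N" "indep E S0" "card I \<le> card S0" "card SN \<le> card S0"
      unfolding S0_def using IC SN(1) indI indSN by auto
    have cross: "{u,v} \<notin> E" if u: "u \<in> C \<union> N" and v: "v \<in> R" for u v
    proof
      assume e: "{u,v} \<in> E"
      have vV: "v \<in> V" "v \<notin> C" "v \<notin> N" using v unfolding R_def by auto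
      show False
      proof (cases "u \<in> C")
        case True
        then have "v \<in> N" using vV e unfolding N_def nbhd_def by blast
        then show False using vV by simp
      next
        case False
        then have "u \<in> N" using u by simp
        then have "v \<in> C \<union> N" using cl e unfolding closed_def N_def by blast
        then show False using vV by simp
      qed
    qed
    define S where "S = S0 \<union> SR"
    have indS: "indep E S"
      unfolding indep_def
    proof (intro ballI)
      fix a b assume a: "a \<in> S" and b: "b \<in> S"
      show "{a,b} \<notin> E"
      proof (cases "a \<in> S0")
        case True
        show ?thesis
        proof (cases "b \<in> S0")
          case True then show ?thesis using \<open>a \<in> S0\<close> S0(2) unfolding indep_def by simp
        next
          case False
          then have "b \<in> R" using b SR(1) unfolding S_def by auto
          then show ?thesis using cross[of a b] \<open>a \<in> S0\<close> S0(1) by auto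
        qed
      next
        case False
        then have aR: "a \<in> SR" using a unfolding S_def by auto
        show ?thesis
        proof (cases "b \<in> S0")
          case True
          then have "{b,a} \<notin> E" using cross[of b a] aR SR(1) S0(1) by auto
          then show ?thesis by (simp add: insert_commute)
        next
          case False
          then have "b \<in> SR" using b unfolding S_def by auto
          then show ?thesis using aR indSR unfolding indep_def by simp
        qed
      qed
    qed
    have SV: "S \<subseteq> V" unfolding S_def using S0(1) SR(1) CV NV RV by auto
    have finC: "finite C" using finite_subset[OF CV finV] .
    have finN: "finite N" using finite_subset[OF NV finV] .
    have finR: "finite R" using finite_subset[OF RV finV] .
    have Veq: "V = (C \<union> N) \<union> R" unfolding R_def using CV NV by auto
    have cV: "card V = card C + card N + card R"
    proof -
      have "card V = card (C \<union> N) + card R"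
        using Veq finC finN finR card_Un_disjoint[of "C \<union> N" R] unfolding R_def by auto
      moreover have "card (C \<union> N) = card C + card N"
        using card_Un_disjoint[OF finC finN] NC by auto
      ultimately show ?thesis by simp
    qed
    have cS: "card S = card S0 + card SR"
    proof -
      have "finite S0" using finite_subset[OF S0(1)] finC finN by auto
      moreover have "finite SR" using finite_subset[OF SR(1) finR] .
      moreover have "S0 \<inter> SR = {}" using S0(1) SR(1) unfolding R_def by auto
      ultimately show ?thesis unfolding S_def by (rule card_Un_disjoint)
    qed
    have m1: "2 * t * card SN \<le> 2 * t * card S0" using S0(4) by simp
    have "card V \<le> 2 * Suc t * card S"
    proof -
      have "card V \<le> (2 * card S0) + 2 * t * card S0 + 2 * Suc t * card SR"
        using cV cardC S0(3) SN(3) SR(3) m1 by linarith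
      also have "\<dots> = 2 * Suc t * card S" using cS by (simp add: algebra_simps)
      finally show ?thesis .
    qed
    then show ?thesis using SV indS by blast
  qed
qed

lemma alpha:
  "simple_graph V E \<Longrightarrow> \<not> has_odd_complete_minor V E (Suc t) \<Longrightarrow>
     \<exists>S\<subseteq>V. indep E S \<and> card V \<le> 2 * t * card S"
proof (induction t arbitrary: V E)
  case 0
  have "V = {}"
  proof (rule ccontr)
    assume "V \<noteq> {}"
    then obtain r where "r \<in> V" by blast
    then show False using K1[OF 0(1)] 0(2) by blast
  qed
  then show ?case unfolding indep_def by auto
next
  case (Suc t)
  show ?case by (rule alpha_step[OF Suc.IH Suc.prems])
qed


lemma colourable_mono_le:
  assumes "colourable V E m" "m \<le> m'"
  shows "colourable V E m'"
  using assms unfolding colourable_def by (meson order_less_le_trans)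

lemma colour_bound:
  fixes t :: nat
  assumes t: "t > 0"
  shows "simple_graph (V::'a set) E \<Longrightarrow> \<not> has_odd_complete_minor V E t \<Longrightarrow>
    \<exists>m. colourable V E m \<and> real m \<le> real k + real (card V) * (1 - 1 / (2 * real t)) ^ k"
proof (induction k arbitrary: V E)
  case 0
  have finV: "finite V" using 0(1) unfolding simple_graph_def by simp
  obtain h where h: "bij_betw h V {0..<card V}" using ex_bij_betw_finite_nat[OF finV] by blast
  have "colourable V E (card V)"
    unfolding colourable_def
  proof (intro exI[of _ h] conjI allI impI ballI)
    fix v assume "v \<in> V" then show "h v < card V" using h unfolding bij_betw_def by auto
  next
    fix u v assume e: "{u,v} \<in> E" and uv: "u \<noteq> v"
    have "u \<in> V" "v \<in> V" using edge_in[OF 0(1) e] by auto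
    then show "h u \<noteq> h v" using h uv unfolding bij_betw_def inj_on_def by auto
  qed
  then show ?case by auto
next
  case (Suc k)
  note sg = Suc.prems(1) and nm = Suc.prems(2)
  have finV: "finite V" using sg unfolding simple_graph_def by simp
  obtain t0 where t0: "t = Suc t0" using t by (cases t) auto
  obtain S where S: "S \<subseteq> V" "indep E S" "card V \<le> 2 * t0 * card S"
    using alpha[OF sg] nm t0 by blast
  have cVS: "real (card V) \<le> 2 * real t * real (card S)"
  proof -
    have "card V \<le> 2 * t * card S" using S(3) t0 by (simp add: mult_le_mono)
    then have "real (card V) \<le> real (2 * t * card S)" by (simp only: of_nat_le_iff)
    then show ?thesis by simp
  qed
  define W where "W = V - S"
  have WV: "W \<subseteq> V" unfolding W_def by auto
  have nmW: "\<not> has_odd_complete_minor W (indu E W) t" using odd_mono[OF _ WV] nm by blast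
  obtain m' where m': "colourable W (indu E W) m'"
    "real m' \<le> real k + real (card W) * (1 - 1 / (2 * real t)) ^ k"
    using Suc.IH[OF simple_indu[OF sg WV] nmW] by blast
  obtain c where c: "\<forall>v\<in>W. c v < m'" "\<forall>u v. {u,v} \<in> indu E W \<longrightarrow> u \<noteq> v \<longrightarrow> c u \<noteq> c v"
    using m'(1) unfolding colourable_def by blast
  define c' where "c' = (\<lambda>v. if v \<in> S then m' else c v)"
  have col: "colourable V E (Suc m')"
    unfolding colourable_def
  proof (intro exI[of _ c'] conjI allI impI ballI)
    fix v assume "v \<in> V"
    show "c' v < Suc m'"
    proof (cases "v \<in> S")
      case True then show ?thesis by (simp add: c'_def)
    next
      case False
      then have "v \<in> W" using \<open>v \<in> V\<close> unfolding W_def by auto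
      then have "c v < m'" using c(1) by blast
      then show ?thesis using False by (simp add: c'_def)
    qed
  next
    fix u v assume e: "{u,v} \<in> E" and uv: "u \<noteq> v"
    have uV: "u \<in> V" "v \<in> V" using edge_in[OF sg e] by auto
    show "c' u \<noteq> c' v"
    proof (cases "u \<in> S")
      case True
      show ?thesis
      proof (cases "v \<in> S")
        case True
        then show ?thesis using \<open>u \<in> S\<close> S(2) e unfolding indep_def by blast
      next
        case False
        then have "v \<in> W" using uV unfolding W_def by auto
        then show ?thesis using c(1) \<open>u \<in> S\<close> False unfolding c'_def by auto
      qed
    next
      case False
      then have uW: "u \<in> W" using uV unfolding W_def by auto
      show ?thesis
      proof (cases "v \<in> S")
        case True
        then show ?thesis using c(1) uW False unfolding c'_def by auto
      next
        case vF: False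
        then have vW: "v \<in> W" using uV unfolding W_def by auto
        have "{u,v} \<in> indu E W" using e uW vW unfolding indu_def by auto
        then have "c u \<noteq> c v" using c(2) uv by blast
        then show ?thesis using False vF unfolding c'_def by auto
      qed
    qed
  qed
  define q where "q = 1 - 1 / (2 * real t)"
  have tpos: "real t \<ge> 1" using t by simp
  have q0: "q \<ge> 0" unfolding q_def using tpos by (simp add: field_simps)
  have cW: "real (card W) = real (card V) - real (card S)"
    unfolding W_def using finV S(1) by (simp add: card_Diff_subset finite_subset of_nat_diff card_mono)
  have cWq: "real (card W) \<le> real (card V) * q"
  proof -
    have "real (card V) / (2 * real t) \<le> real (card S)"
      using cVS tpos by (simp add: field_simps)
    then show ?thesis unfolding q_def using cW by (simp add: algebra_simps)
  qed
  have "real (card W) * q ^ k \<le> real (card V) * q * q ^ k"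
    using cWq q0 by (simp add: mult_right_mono)
  then have "real (Suc m') \<le> real (Suc k) + real (card V) * q ^ Suc k"
    using m'(2) unfolding q_def[symmetric] by (simp add: algebra_simps)
  then show ?case using col unfolding q_def by blast
qed

theorem corollary2p5:
  fixes V :: "'a set" and E :: "'a set set" and t :: nat
  assumes "simple_graph V E"
    and "t > 0"
    and "card V \<ge> t"
    and "\<not> has_odd_complete_minor V E t"
  shows "real (chromatic_number V E) \<le> 2 * real t * (1 + ln (real (card V) / real t))"
proof -
  define n where "n = real (card V)"
  define tt where "tt = real t"
  have tt1: "tt \<ge> 1" unfolding tt_def using assms(2) by simp
  have ntt: "n \<ge> tt" unfolding n_def tt_def using assms(3) by simp
  have npos: "n > 0" using tt1 ntt by simp
  define L where "L = ln (n / tt)"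
  have L0: "L \<ge> 0" unfolding L_def using tt1 ntt by simp
  define k where "k = nat \<lceil>2 * tt * L\<rceil>"
  have k1: "real k \<ge> 2 * tt * L" unfolding k_def by (rule of_nat_ceiling)
  have k2: "real k \<le> 2 * tt * L + 1"
  proof -
    have "0 \<le> 2 * tt * L" using tt1 L0 by simp
    then have "real k = real_of_int \<lceil>2 * tt * L\<rceil>" unfolding k_def by simp
    also have "\<dots> \<le> 2 * tt * L + 1" by linarith
    finally show ?thesis .
  qed
  obtain m where m: "colourable V E m" "real m \<le> real k + n * (1 - 1 / (2 * tt)) ^ k"
    using colour_bound[OF assms(2) assms(1) assms(4), of k] unfolding n_def tt_def by blast
  define x where "x = 1 / (2 * tt)"
  have x0: "x \<ge> 0" "x \<le> 1" unfolding x_def using tt1 by (simp_all add: field_simps)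
  have "(1 - x) ^ k \<le> exp (- x) ^ k"
  proof (rule power_mono)
    show "1 - x \<le> exp (- x)" using exp_ge_add_one_self[of "- x"] by simp
    show "0 \<le> 1 - x" using x0 by simp
  qed
  also have "\<dots> = exp (- (real k * x))" by (simp add: exp_of_nat_mult[symmetric])
  also have "\<dots> \<le> exp (- L)"
  proof -
    have "real k * x \<ge> L"
    proof -
      have "real k * x \<ge> 2 * tt * L * x" using k1 x0 by (simp add: mult_right_mono)
      moreover have "2 * tt * L * x = L" unfolding x_def using tt1 by (simp add: field_simps)
      ultimately show ?thesis by simp
    qed
    then show ?thesis by simp
  qed
  also have "\<dots> = tt / n" unfolding L_def using npos tt1 by (simp add: exp_minus inverse_divide)
  finally have qk: "(1 - x) ^ k \<le> tt / n" .
  have nq: "n * (1 - x) ^ k \<le> tt" using qk npos by (simp add: le_divide_eq mult.commute)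
  have "real m \<le> 2 * tt * L + 1 + tt" using m(2) k2 nq unfolding x_def by linarith
  also have "\<dots> \<le> 2 * tt * (1 + L)" using tt1 by (simp add: algebra_simps)
  finally have mb: "real m \<le> 2 * tt * (1 + L)" .
  have "chromatic_number V E \<le> m" unfolding chromatic_number_def using m(1) by (rule Least_le)
  then have "real (chromatic_number V E) \<le> real m" by simp
  then show ?thesis using mb unfolding tt_def L_def n_def by simp
qed

end
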